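(* Let $\mathbf{b}\in H_{1,2,2}$ have odd norm $N(\mathbf{b})$. Then there is a unit $\mathbf{u}$ of $H_{1,2,2}$ with $\mathbf{b}-\mathbf{u}\in 2H_{1,2,2}$.
   Context: Let $\mathbf{i},\mathbf{j},\mathbf{k}$ be the standard quaternion units; $\overline{\mathbf{q}}$ is quaternion conjugation and $N(\mathbf{q})=\mathbf{q}\overline{\mathbf{q}}$. $H_{1,2,2}$ is the subring of the quaternions equal to the $\mathbb{Z}$-module generated by $\mathbf{v}_1=1$, $\mathbf{v}_2=\mathbf{i}$, $\mathbf{v}_3=\tfrac12(1+\mathbf{i}+\sqrt2\,\mathbf{j})$, $\mathbf{v}_4=\tfrac12(1+\mathbf{i}+\sqrt2\,\mathbf{k})$. A unit of $H_{1,2,2}$ is an element invertible in $H_{1,2,2}$ (equivalently, an element of norm $1$). *)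

theory Defs
  imports Complex_Main
begin

datatype quat = Quat (qre: real) (qi: real) (qj: real) (qk: real)

instantiation quat :: "{zero, one, plus, minus, uminus, times}"
begin
definition "0 = Quat 0 0 0 0"
definition "1 = Quat 1 0 0 0"
definition "p + q = Quat (qre p + qre q) (qi p + qi q) (qj p + qj q) (qk p + qk q)"
definition "p - q = Quat (qre p - qre q) (qi p - qi q) (qj p - qj q) (qk p - qk q)"
definition "- q = Quat (- qre q) (- qi q) (- qj q) (- qk q)"
definition "p * q = Quat
   (qre p * qre q - qi p * qi q - qj p * qj q - qk p * qk q)
   (qre p * qi q + qi p * qre q + qj p * qk q - qk p * qj q)
   (qre p * qj q - qi p * qk q + qj p * qre q + qk p * qi q)
   (qre p * qk q + qi p * qj q - qj p * qi q + qk p * qre q)"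
instance ..
end

definition qI :: quat where "qI = Quat 0 1 0 0"
definition qJ :: quat where "qJ = Quat 0 0 1 0"
definition qK :: quat where "qK = Quat 0 0 0 1"

definition qreal :: "real \<Rightarrow> quat" where "qreal r = Quat r 0 0 0"
definition qscale :: "real \<Rightarrow> quat \<Rightarrow> quat" where
  "qscale r q = Quat (r * qre q) (r * qi q) (r * qj q) (r * qk q)"
definition qcnj :: "quat \<Rightarrow> quat" where
  "qcnj q = Quat (qre q) (- qi q) (- qj q) (- qk q)"
definition qN :: "quat \<Rightarrow> quat" where "qN q = q * qcnj q"

definition v1 :: quat where "v1 = 1"
definition v2 :: quat where "v2 = qI"
definition v3 :: quat where "v3 = qscale (1/2) (1 + qI + qscale (sqrt 2) qJ)"
definition v4 :: quat where "v4 = qscale (1/2) (1 + qI + qscale (sqrt 2) qK)"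

definition H122 :: "quat set" where
  "H122 = {qscale (of_int a) v1 + qscale (of_int b) v2 + qscale (of_int c) v3 + qscale (of_int d) v4
           | a b c d :: int. True}"

definition H122_unit :: "quat \<Rightarrow> bool" where
  "H122_unit u \<longleftrightarrow> u \<in> H122 \<and> (\<exists>v \<in> H122. u * v = 1 \<and> v * u = 1)"

end

theory Submission
  imports Defs "HOL-Number_Theory.Cong"
begin

definition Hq :: "int \<Rightarrow> int \<Rightarrow> int \<Rightarrow> int \<Rightarrow> quat" where
  "Hq a b c d = qscale (of_int a) v1 + qscale (of_int b) v2 + qscale (of_int c) v3 + qscale (of_int d) v4"

definition Nf :: "int \<Rightarrow> int \<Rightarrow> int \<Rightarrow> int \<Rightarrow> int" where
  "Nf a b c d = a*a+b*b+(a+b)*(c+d)+c*c+c*d+d*d"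

lemma Hq_eq: "Hq a b c d = Quat (a+(c+d)/2) (b+(c+d)/2) (c*sqrt 2/2) (d*sqrt 2/2)"
  unfolding Hq_def v1_def v2_def v3_def v4_def qscale_def plus_quat_def one_quat_def qI_def qJ_def qK_def
  by (simp add: field_simps)

lemma H122_Hq: "H122 = {Hq a b c d | a b c d. True}"
  unfolding H122_def Hq_def by simp

lemma Hq_in: "Hq a b c d \<in> H122"
  unfolding H122_Hq by blast

lemma cnj_Hq: "qcnj (Hq a b c d) = Hq (a+c+d) (-b) (-c) (-d)"
  unfolding Hq_eq qcnj_def by (simp add: field_simps)

lemma s2: "sqrt 2 * sqrt 2 = (2::real)" by simp

lemma mul_cnj: "Hq a b c d * qcnj (Hq a b c d) = qreal (of_int (Nf a b c d))"
  unfolding Hq_eq qcnj_def times_quat_def qreal_def Nf_def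
  by (simp add: field_simps power2_eq_square)

lemma cnj_mul: "qcnj (Hq a b c d) * Hq a b c d = qreal (of_int (Nf a b c d))"
  unfolding Hq_eq qcnj_def times_quat_def qreal_def Nf_def
  by (simp add: field_simps power2_eq_square)

lemma unit_Hq: "Nf a b c d = 1 \<Longrightarrow> H122_unit (Hq a b c d)"
  unfolding H122_unit_def
  apply (rule conjI[OF Hq_in])
  apply (rule bexI[where x="qcnj (Hq a b c d)"])
  using mul_cnj[of a b c d] cnj_mul[of a b c d]
   apply (simp add: qreal_def one_quat_def)
  by (simp add: cnj_Hq Hq_in)

lemma diff_Hq: "Hq (e1+2*p) (e2+2*q) (e3+2*r) (e4+2*s) - Hq e1 e2 e3 e4 = qscale 2 (Hq p q r s)"
  unfolding Hq_eq minus_quat_def qscale_def by (simp add: field_simps)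

lemma Nf_cong: "[Nf a b c d = Nf (a mod 2) (b mod 2) (c mod 2) (d mod 2)] (mod 2)"
  unfolding Nf_def
  by (intro cong_add cong_mult) (simp_all add: cong_def)

lemma small: assumes "x \<in> {0,1}" "y \<in> {0,1}" "z \<in> {0,1}" "w \<in> {0,1}" "odd (Nf x y z w)"
  shows "\<exists>e1 e2 e3 e4. Nf e1 e2 e3 e4 = 1 \<and> even (x-e1) \<and> even (y-e2) \<and> even (z-e3) \<and> even (w-e4)"
  using assms(1-4)
  apply (simp only: insert_iff empty_iff simp_thms)
  apply (elim disjE)
  subgoal using assms(5) by (simp add: Nf_def)
  subgoal by (rule exI[of _ "0"], rule exI[of _ "0"], rule exI[of _ "0"], rule exI[of _ "-1"]) (simp add: Nf_def)
  subgoal by (rule exI[of _ "0"], rule exI[of _ "0"], rule exI[of _ "-1"], rule exI[of _ "0"]) (simp add: Nf_def)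
  subgoal by (rule exI[of _ "0"], rule exI[of _ "0"], rule exI[of _ "-1"], rule exI[of _ "1"]) (simp add: Nf_def)
  subgoal by (rule exI[of _ "0"], rule exI[of _ "-1"], rule exI[of _ "0"], rule exI[of _ "0"]) (simp add: Nf_def)
  subgoal by (rule exI[of _ "0"], rule exI[of _ "-1"], rule exI[of _ "0"], rule exI[of _ "1"]) (simp add: Nf_def)
  subgoal by (rule exI[of _ "0"], rule exI[of _ "-1"], rule exI[of _ "1"], rule exI[of _ "0"]) (simp add: Nf_def)
  subgoal using assms(5) by (simp add: Nf_def)
  subgoal by (rule exI[of _ "-1"], rule exI[of _ "0"], rule exI[of _ "0"], rule exI[of _ "0"]) (simp add: Nf_def)
  subgoal by (rule exI[of _ "-1"], rule exI[of _ "0"], rule exI[of _ "0"], rule exI[of _ "1"]) (simp add: Nf_def)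
  subgoal by (rule exI[of _ "-1"], rule exI[of _ "0"], rule exI[of _ "1"], rule exI[of _ "0"]) (simp add: Nf_def)
  subgoal using assms(5) by (simp add: Nf_def)
  subgoal using assms(5) by (simp add: Nf_def)
  subgoal by (rule exI[of _ "-1"], rule exI[of _ "-1"], rule exI[of _ "0"], rule exI[of _ "1"]) (simp add: Nf_def)
  subgoal by (rule exI[of _ "-1"], rule exI[of _ "-1"], rule exI[of _ "1"], rule exI[of _ "0"]) (simp add: Nf_def)
  subgoal by (rule exI[of _ "-1"], rule exI[of _ "-1"], rule exI[of _ "1"], rule exI[of _ "1"]) (simp add: Nf_def)
  done

lemma key:
  assumes "odd (Nf a b c d)"
  shows "\<exists>e1 e2 e3 e4 p q r s. Nf e1 e2 e3 e4 = 1 \<and> a = e1+2*p \<and> b = e2+2*q \<and> c = e3+2*r \<and> d = e4+2*s"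
proof -
  have o: "odd (Nf (a mod 2) (b mod 2) (c mod 2) (d mod 2))"
  proof -
    have "Nf a b c d mod 2 = Nf (a mod 2) (b mod 2) (c mod 2) (d mod 2) mod 2"
      using Nf_cong[of a b c d] unfolding cong_def .
    then show ?thesis using assms by (metis even_iff_mod_2_eq_zero)
  qed
  have a: "a mod 2 \<in> {0,1}" "b mod 2 \<in> {0,1}" "c mod 2 \<in> {0,1}" "d mod 2 \<in> {0,1}" by auto
  obtain e1 e2 e3 e4 where e: "Nf e1 e2 e3 e4 = 1" "even (a mod 2 - e1)" "even (b mod 2 - e2)"
     "even (c mod 2 - e3)" "even (d mod 2 - e4)"
    using small[OF a o] by blast
  have "even (a - e1)" "even (b - e2)" "even (c - e3)" "even (d - e4)"
    using e by presburger+
  then obtain p q r s where pqrs: "a - e1 = 2*p" "b - e2 = 2*q" "c - e3 = 2*r" "d - e4 = 2*s"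
    unfolding dvd_def by blast
  have "a = e1+2*p" "b = e2+2*q" "c = e3+2*r" "d = e4+2*s" using pqrs by linarith+
  thus ?thesis using e(1) by blast
qed

theorem lemma7:
  assumes "b \<in> H122"
    and "\<exists>n::int. odd n \<and> qN b = qreal (of_int n)"
  shows "\<exists>u. H122_unit u \<and> (\<exists>x \<in> H122. b - u = qscale 2 x)"
proof -
  obtain a b1 c d where bq: "b = Hq a b1 c d" using assms(1) unfolding H122_Hq by blast
  obtain n :: int where n: "odd n" "qN b = qreal (of_int n)" using assms(2) by blast
  have "qN b = qreal (of_int (Nf a b1 c d))" unfolding qN_def bq by (rule mul_cnj)
  hence "Nf a b1 c d = n" using n(2) by (simp add: qreal_def)
  with n(1) obtain e1 e2 e3 e4 p q r s where k: "Nf e1 e2 e3 e4 = 1" "a = e1+2*p" "b1 = e2+2*q" "c = e3+2*r" "d = e4+2*s"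
    using key by blast
  show ?thesis
    apply (rule exI[where x="Hq e1 e2 e3 e4"])
    apply (rule conjI[OF unit_Hq[OF k(1)]])
    apply (rule bexI[OF _ Hq_in[of p q r s]])
    unfolding bq k(2-5) by (rule diff_Hq)
qed

end
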